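(* Let $g_1,\dots,g_m$ be rational maps of degree at least 2 such that $(g_1,\dots,g_m)$ satisfies (A1)–(A3) for $H=\langle g_1,\dots,g_m\rangle$. Let $n\ge2$ and let $f_1,\dots,f_{s+1}$ ($s\ge1$) be mutually distinct elements of $\{g_{\omega_n}\circ\cdots\circ g_{\omega_1}:(\omega_1,\dots,\omega_n)\in\{1,\dots,m\}^n\}$. Then $(f_1,\dots,f_{s+1})$ satisfies (A1)–(A3) for $G=\langle f_1,\dots,f_{s+1}\rangle$. If moreover all $g_i$ are polynomials and $P(H)\setminus\{\infty\}$ is bounded in $\mathbb C$, then $P(G)\setminus\{\infty\}$ is bounded in $\mathbb C$.
   Context: For a semigroup $H$ of non-constant rational maps on $\hat{\mathbb C}$, $F(H)$ is the set of points with a neighbourhood where $H$ is equicontinuous (spherical metric), $J(H)$ its complement. For $H$ generated by $h_1,\dots,h_k$, $P(H)$ is the closure of $\bigcup_{h\in H\cup\{\mathrm{id}\}}h(\text{critical values of }h_1,\dots,h_k)$. A minimal set of $H$ is a non-empty compact $K$ with $K=\overline{\{h(z):h\in H\}}$ for every $z\in K$. For a tuple $(h_1,\dots,h_k)$ generating $H$: (A1) means $P(H)\subset F(H)$; (A2) means $h_i^{-1}(J(H))\cap h_j^{-1}(J(H))=\emptyset$ for $i\ne j$; (A3) means $H$ has at least two minimal sets. *)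

theory Defs
  imports "HOL-Analysis.Analysis" "HOL-Computational_Algebra.Computational_Algebra"
begin

text \<open>The Riemann sphere is modelled as complex option; None is the point at infinity.\<close>

type_synonym rsphere = "complex option"

text \<open>Stereographic embedding of the Riemann sphere onto the unit sphere of C x R (= R^3).
  The spherical (chordal) metric is the Euclidean distance of the images.\<close>
definition stereo :: "rsphere \<Rightarrow> complex \<times> real" where
  "stereo z = (case z of None \<Rightarrow> (0, 1)
     | Some x \<Rightarrow> ((2 * x) / complex_of_real (1 + (cmod x)^2),
                  ((cmod x)^2 - 1) / (1 + (cmod x)^2)))"

definition sdist :: "rsphere \<Rightarrow> rsphere \<Rightarrow> real" where
  "sdist z w = dist (stereo z) (stereo w)"

definition sclosure :: "rsphere set \<Rightarrow> rsphere set" where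
  "sclosure A = {z. stereo z \<in> closure (stereo ` A)}"

definition scompact :: "rsphere set \<Rightarrow> bool" where
  "scompact K \<longleftrightarrow> compact (stereo ` K)"

definition rat_eval :: "complex poly \<Rightarrow> complex poly \<Rightarrow> rsphere \<Rightarrow> rsphere" where
  "rat_eval p q z = (case z of
       Some x \<Rightarrow> (if poly q x = 0 then None else Some (poly p x / poly q x))
     | None \<Rightarrow> (if degree p > degree q then None
               else if degree p = degree q then Some (lead_coeff p / lead_coeff q)
               else Some 0))"

definition rat_map_of_degree :: "(rsphere \<Rightarrow> rsphere) \<Rightarrow> nat \<Rightarrow> bool" where
  "rat_map_of_degree f d \<longleftrightarrow>
     (\<exists>p q. coprime p q \<and> q \<noteq> 0 \<and> f = rat_eval p q \<and> d = max (degree p) (degree q))"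

definition is_polynomial_map :: "(rsphere \<Rightarrow> rsphere) \<Rightarrow> bool" where
  "is_polynomial_map f \<longleftrightarrow> (\<exists>p. f = rat_eval p 1)"

text \<open>Local coordinates: chart_inv z parametrises a neighbourhood of z by t near 0,
  chart w is a local coordinate centred at w.\<close>
definition chart_inv :: "rsphere \<Rightarrow> complex \<Rightarrow> rsphere" where
  "chart_inv z t = (case z of Some a \<Rightarrow> Some (a + t)
                    | None \<Rightarrow> (if t = 0 then None else Some (1 / t)))"

definition chart :: "rsphere \<Rightarrow> rsphere \<Rightarrow> complex" where
  "chart w u = (case w of
       Some b \<Rightarrow> (case u of Some v \<Rightarrow> v - b | None \<Rightarrow> 0)
     | None \<Rightarrow> (case u of Some v \<Rightarrow> 1 / v | None \<Rightarrow> 0))"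

definition critical_point :: "(rsphere \<Rightarrow> rsphere) \<Rightarrow> rsphere \<Rightarrow> bool" where
  "critical_point f z \<longleftrightarrow> deriv (\<lambda>t. chart (f z) (f (chart_inv z t))) 0 = 0"

definition critical_values :: "(rsphere \<Rightarrow> rsphere) list \<Rightarrow> rsphere set" where
  "critical_values hs = {h z | h z. h \<in> set hs \<and> critical_point h z}"

inductive_set gen_semigroup :: "('a \<Rightarrow> 'a) set \<Rightarrow> ('a \<Rightarrow> 'a) set" for S where
  gen: "h \<in> S \<Longrightarrow> h \<in> gen_semigroup S"
| comp: "h1 \<in> gen_semigroup S \<Longrightarrow> h2 \<in> gen_semigroup S \<Longrightarrow> h1 \<circ> h2 \<in> gen_semigroup S"

definition equicont_at :: "(rsphere \<Rightarrow> rsphere) set \<Rightarrow> rsphere \<Rightarrow> bool" where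
  "equicont_at H x \<longleftrightarrow>
     (\<forall>e>0. \<exists>d>0. \<forall>y. sdist x y < d \<longrightarrow> (\<forall>h\<in>H. sdist (h x) (h y) < e))"

definition fatou :: "(rsphere \<Rightarrow> rsphere) set \<Rightarrow> rsphere set" where
  "fatou H = {z. \<exists>r>0. \<forall>x. sdist z x < r \<longrightarrow> equicont_at H x}"

definition julia :: "(rsphere \<Rightarrow> rsphere) set \<Rightarrow> rsphere set" where
  "julia H = UNIV - fatou H"

definition postcrit :: "(rsphere \<Rightarrow> rsphere) list \<Rightarrow> rsphere set" where
  "postcrit hs = sclosure (\<Union>h\<in>insert id (gen_semigroup (set hs)). h ` critical_values hs)"

definition minimal_set :: "(rsphere \<Rightarrow> rsphere) set \<Rightarrow> rsphere set \<Rightarrow> bool" where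
  "minimal_set H K \<longleftrightarrow> K \<noteq> {} \<and> scompact K \<and>
     (\<forall>z\<in>K. K = sclosure {h z | h. h \<in> H})"

definition A1 :: "(rsphere \<Rightarrow> rsphere) list \<Rightarrow> bool" where
  "A1 hs \<longleftrightarrow> postcrit hs \<subseteq> fatou (gen_semigroup (set hs))"

definition A2 :: "(rsphere \<Rightarrow> rsphere) list \<Rightarrow> bool" where
  "A2 hs \<longleftrightarrow> (\<forall>i<length hs. \<forall>j<length hs. i \<noteq> j \<longrightarrow>
     (hs!i) -` julia (gen_semigroup (set hs)) \<inter> (hs!j) -` julia (gen_semigroup (set hs)) = {})"

definition A3 :: "(rsphere \<Rightarrow> rsphere) list \<Rightarrow> bool" where
  "A3 hs \<longleftrightarrow> (\<exists>K1 K2. K1 \<noteq> K2 \<and> minimal_set (gen_semigroup (set hs)) K1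
                        \<and> minimal_set (gen_semigroup (set hs)) K2)"

text \<open>word_map gs [w1,...,wn] = g_wn o ... o g_w1 (0-based indices).\<close>
fun word_map :: "('a \<Rightarrow> 'a) list \<Rightarrow> nat list \<Rightarrow> 'a \<Rightarrow> 'a" where
  "word_map gs [] = id"
| "word_map gs (i # ws) = word_map gs ws \<circ> (gs ! i)"

definition words_of_length :: "('a \<Rightarrow> 'a) list \<Rightarrow> nat \<Rightarrow> ('a \<Rightarrow> 'a) set" where
  "words_of_length gs n =
     {word_map gs ws | ws. length ws = n \<and> set ws \<subseteq> {..<length gs}}"

end

theory Submission
  imports Defs "HOL-Complex_Analysis.Complex_Analysis"
begin


lemma sdist_sq_SS:
  "(sdist (Some a) (Some b))^2 = 4*(cmod (a-b))^2 / ((1+(cmod a)^2)*(1+(cmod b)^2))"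
proof -
  obtain x1 y1 where a: "a = Complex x1 y1" by (metis complex.exhaust_sel)
  obtain x2 y2 where b: "b = Complex x2 y2" by (metis complex.exhaust_sel)
  define A where "A = 1 + x1^2+y1^2"
  define B where "B = 1 + x2^2+y2^2"
  have p1: "A > 0" "B>0" by (simp_all add: A_def B_def add_pos_nonneg)
  have ca: "(cmod a)^2 = x1^2+y1^2" "(cmod b)^2 = x2^2+y2^2" "(cmod (a-b))^2 = (x1-x2)^2+(y1-y2)^2"
    by (simp_all add: a b cmod_power2)
  have e1: "(cmod (2*a / complex_of_real (1+(cmod a)^2) - 2*b / complex_of_real (1+(cmod b)^2)))^2
     = (2*x1/A - 2*x2/B)^2 + (2*y1/A-2*y2/B)^2"
    unfolding ca(1,2) A_def B_def by (simp add: cmod_power2 a b add.assoc)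
  have "(sdist (Some a) (Some b))^2 = (2*x1/A - 2*x2/B)^2 + (2*y1/A-2*y2/B)^2
      + ((x1^2+y1^2 - 1)/A - (x2^2+y2^2-1)/B)^2"
  proof -
    have "(sdist (Some a) (Some b))^2 = (cmod (2*a / complex_of_real (1+(cmod a)^2) - 2*b / complex_of_real (1+(cmod b)^2)))^2
      + (((cmod a)^2 - 1)/(1+(cmod a)^2) - ((cmod b)^2-1)/(1+(cmod b)^2))^2"
      unfolding sdist_def by (simp add: stereo_def dist_norm norm_Pair)
    then show ?thesis unfolding e1 by (simp add: ca A_def B_def add.assoc)
  qed
  also have "\<dots> = 4*((x1-x2)^2+(y1-y2)^2)/(A*B)"
  proof -
    have fr: "uu/A - vv/B = (uu*B - vv*A)/(A*B)" for uu vv using p1 by (simp add: field_simps)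
    have N: "(2*x1*B - 2*x2*A)^2 + (2*y1*B-2*y2*A)^2 + ((x1^2+y1^2 - 1)*B - (x2^2+y2^2-1)*A)^2
       = 4*((x1-x2)^2+(y1-y2)^2) * (A*B)" unfolding A_def B_def by algebra
    have "(2*x1/A - 2*x2/B)^2 + (2*y1/A-2*y2/B)^2 + ((x1^2+y1^2 - 1)/A - (x2^2+y2^2-1)/B)^2
       = ((2*x1*B - 2*x2*A)^2 + (2*y1*B-2*y2*A)^2 + ((x1^2+y1^2 - 1)*B - (x2^2+y2^2-1)*A)^2)/(A*B)^2"
      unfolding fr power_divide by (simp add: add_divide_distrib)
    also have "\<dots> = 4*((x1-x2)^2+(y1-y2)^2)/(A*B)" unfolding N using p1 by (simp add: power2_eq_square)
    finally show ?thesis .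
  qed
  finally show ?thesis by (simp add: ca A_def B_def add.assoc)
qed

lemma sdist_sq_NS:
  "(sdist None (Some b))^2 = 4 / (1+(cmod b)^2)"
proof -
  obtain x2 y2 where b: "b = Complex x2 y2" by (metis complex.exhaust_sel)
  define B where "B = 1 + x2^2+y2^2"
  have p1: "B>0" by (simp_all add: B_def add_pos_nonneg)
  have ca: "(cmod b)^2 = x2^2+y2^2"
    by (simp_all add: b cmod_power2)
  have e1: "(cmod (2*b / complex_of_real (1+(cmod b)^2)))^2
     = (2*x2/B)^2 + (2*y2/B)^2"
    unfolding ca B_def by (simp add: cmod_power2 b add.assoc)
  have "(sdist None (Some b))^2 = (2*x2/B)^2 + (2*y2/B)^2
      + (1 - (x2^2+y2^2-1)/B)^2"
  proof -
    have "(sdist None (Some b))^2 = (cmod (2*b / complex_of_real (1+(cmod b)^2)))^2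
      + (1 - ((cmod b)^2-1)/(1+(cmod b)^2))^2"
      unfolding sdist_def by (simp add: stereo_def dist_norm norm_Pair norm_minus_commute)
    then show ?thesis unfolding e1 by (simp add: ca B_def add.assoc)
  qed
  also have "\<dots> = 4/B"
  proof -
    have "(2*x2/B)^2 + (2*y2/B)^2 + (1 - (x2^2+y2^2-1)/B)^2 = ((2*x2)^2 + (2*y2)^2 + (B - (x2^2+y2^2-1))^2)/B^2"
    proof -
      have "1 - (x2^2+y2^2-1)/B = (B - (x2^2+y2^2-1))/B" using p1 by (simp add: field_simps)
      then show ?thesis by (simp add: power_divide add_divide_distrib)
    qed
    also have "(2*x2)^2 + (2*y2)^2 + (B - (x2^2+y2^2-1))^2 = 4*B" unfolding B_def by algebra
    finally show ?thesis using p1 by (simp add: power2_eq_square)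
  qed
  finally show ?thesis by (simp add: ca B_def)
qed

lemma sdist_nonneg: "sdist z w \<ge> 0" by (simp add: sdist_def)
lemma sdist_sym: "sdist z w = sdist w z" by (simp add: sdist_def dist_commute)
lemma sdist_triangle: "sdist x z \<le> sdist x y + sdist y z"
  by (simp add: sdist_def dist_triangle)
lemma sdist_refl[simp]: "sdist z z = 0" by (simp add: sdist_def)

lemma sq_eq_imp: "(x::real) \<ge> 0 \<Longrightarrow> y \<ge> 0 \<Longrightarrow> x^2 = y^2 \<Longrightarrow> x = y"
  by (simp add: power2_eq_iff_nonneg)

lemma inv_aux: "b \<noteq> 0 \<Longrightarrow> 4/(1+(cmod (1/b))^2) = 4*(cmod b)^2/(1+(cmod b)^2)"
  by (simp add: norm_divide field_simps)

definition iota :: "rsphere \<Rightarrow> rsphere" where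
  "iota z = (case z of None \<Rightarrow> Some 0 | Some a \<Rightarrow> (if a = 0 then None else Some (1/a)))"

lemma iota_iota[simp]: "iota (iota z) = z"
  by (auto simp: iota_def split: option.splits)

lemma iota_isometry: "sdist (iota z) (iota w) = sdist z w"
proof -
  have key: "(sdist (iota z) (iota w))^2 = (sdist z w)^2" for z w
  proof (cases z)
    case None
    then show ?thesis
    proof (cases w)
      case (Some b)
      show ?thesis
      proof (cases "b = 0")
        case True then show ?thesis using None Some by (simp add: iota_def sdist_sym)
      next
        case False
        have pb: "cmod b > 0" using False by simp
        have "(sdist (Some 0) (Some (1/b)))^2 = 4 / (1+(cmod b)^2)"
          unfolding sdist_sq_SS using pb by (simp add: norm_divide field_simps)
        then show ?thesis using None Some False by (simp add: iota_def sdist_sq_NS)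
      qed
    qed (simp add: iota_def)
  next
    case (Some a)
    note za = Some
    show ?thesis
    proof (cases w)
      case None
      show ?thesis
      proof (cases "a = 0")
        case True then show ?thesis using None za by (simp add: iota_def sdist_sym)
      next
        case False
        have pb: "cmod a > 0" using False by simp
        have "(sdist (Some 0) (Some (1/a)))^2 = 4 / (1+(cmod a)^2)"
          unfolding sdist_sq_SS using pb by (simp add: norm_divide field_simps)
        then show ?thesis using None za False by (simp add: iota_def sdist_sq_NS sdist_sym inv_aux)
      qed
    next
      case (Some b)
      show ?thesis
      proof (cases "a = 0")
        case a0: True
        show ?thesis
        proof (cases "b = 0")
          case True then show ?thesis using a0 za Some by (simp add: iota_def)
        next
          case False
          have pb: "cmod b > 0" using False by simp
          have "(sdist (Some 0) (Some (1/b)))^2 = 4 / (1+(cmod b)^2)"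
            unfolding sdist_sq_SS using pb by (simp add: norm_divide field_simps)
          moreover have "(sdist (Some 0) (Some b))^2 = 4 * (cmod b)^2 / (1+(cmod b)^2)"
            unfolding sdist_sq_SS by simp
          ultimately show ?thesis using a0 za Some False
            by (simp add: iota_def sdist_sq_NS sdist_sym inv_aux)
        qed
      next
        case a0: False
        show ?thesis
        proof (cases "b = 0")
          case True
          have pb: "cmod a > 0" using a0 by simp
          have "(sdist (Some 0) (Some (1/a)))^2 = 4 / (1+(cmod a)^2)"
            unfolding sdist_sq_SS using pb by (simp add: norm_divide field_simps)
          moreover have "(sdist (Some 0) (Some a))^2 = 4 * (cmod a)^2 / (1+(cmod a)^2)"
            unfolding sdist_sq_SS by simp
          ultimately show ?thesis using a0 za Some True
            by (simp add: iota_def sdist_sq_NS sdist_sym inv_aux)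
        next
          case False
          have pa: "cmod a > 0" and pb: "cmod b > 0" using a0 False by auto
          have e: "1/a - 1/b = (b - a) / (a*b)" using a0 False by (simp add: field_simps)
          have "(sdist (Some (1/a)) (Some (1/b)))^2 = (sdist (Some a) (Some b))^2"
            unfolding sdist_sq_SS e using pa pb
            by (simp add: norm_divide norm_mult norm_minus_commute field_simps power2_eq_square)
          then show ?thesis using za Some a0 False by (simp add: iota_def)
        qed
      qed
    qed
  qed
  show ?thesis by (rule sq_eq_imp[OF sdist_nonneg sdist_nonneg key])
qed


fun bad :: "rsphere \<Rightarrow> rsphere" where
  "bad (Some b) = None" | "bad None = Some 0"

lemma chart_inv_0[simp]: "chart_inv z 0 = z"
  by (cases z) (auto simp: chart_inv_def)

lemma chart_self[simp]: "chart z z = 0"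
  by (cases z) (auto simp: chart_def)

lemma chart_chart_inv[simp]: "chart z (chart_inv z t) = t"
  by (cases z) (auto simp: chart_def chart_inv_def)

lemma chart_inv_not_bad: "chart_inv z t \<noteq> bad z"
  by (cases z) (auto simp: chart_inv_def)

lemma chart_inv_chart: "y \<noteq> bad z \<Longrightarrow> chart_inv z (chart z y) = y"
  by (cases z; cases y) (auto simp: chart_def chart_inv_def)

lemma sdist_Some_le: "sdist (Some b) (Some v) \<le> 2 * cmod (v - b)"
proof -
  have "(sdist (Some b) (Some v))^2 \<le> (2 * cmod (v - b))^2"
  proof -
    have d: "(1+(cmod b)^2)*(1+(cmod v)^2) \<ge> 1"
    proof -
      have "1*1 \<le> (1+(cmod b)^2)*(1+(cmod v)^2)" by (intro mult_mono) auto
      then show ?thesis by simp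
    qed
    have "4*(cmod (b-v))^2 / ((1+(cmod b)^2)*(1+(cmod v)^2)) \<le> 4*(cmod (b-v))^2"
      using divide_left_mono[OF d, of "4*(cmod (b-v))^2"] d by simp
    then show ?thesis unfolding sdist_sq_SS by (simp add: power_mult_distrib norm_minus_commute)
  qed
  then show ?thesis by (rule power2_le_imp_le) auto
qed

lemma C2_Some: "e > 0 \<Longrightarrow> \<exists>d>0. \<forall>t. cmod t < d \<longrightarrow> sdist (Some b) (chart_inv (Some b) t) < e"
proof (intro exI[of _ "e/2"] conjI allI impI)
  fix t :: complex assume "cmod t < e/2"
  then show "sdist (Some b) (chart_inv (Some b) t) < e"
    using sdist_Some_le[of b "b + t"] by (simp add: chart_inv_def)
qed simp

lemma C1_Some:
  assumes "e > 0"
  shows "\<exists>d>0. \<forall>y. sdist (Some b) y < d \<longrightarrow> y \<noteq> None \<and> cmod (chart (Some b) y) < e"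
proof -
  define A where "A = 1 + (cmod b)^2"
  have A1: "A \<ge> 1" by (simp add: A_def)
  define d where "d = min (1/A) (e/A)"
  have dpos: "d > 0" using A1 assms by (simp add: d_def)
  have dA: "d*A \<le> 1" "d*A \<le> e" using A1 by (auto simp: d_def min_def field_simps)
  have d1: "d \<le> 1"
  proof -
    have "d \<le> 1/A" by (simp add: d_def)
    also have "\<dots> \<le> 1" using A1 by simp
    finally show ?thesis .
  qed
  show ?thesis
  proof (intro exI[of _ d] conjI allI impI dpos)
    fix y assume y: "sdist (Some b) y < d"
    then have ysq: "(sdist (Some b) y)^2 < d^2"
      using sdist_nonneg by (simp add: power_strict_mono)
    show "y \<noteq> None"
    proof
      assume "y = None"
      then have "(sdist (Some b) y)^2 = 4/A" using sdist_sq_NS[of b] by (simp add: sdist_sym A_def)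
      moreover have "d^2 \<le> 4/A"
      proof -
        have "d^2 \<le> d" using d1 dpos by (simp add: power2_eq_square mult_le_cancel_right1)
        also have "d \<le> 1/A" by (simp add: d_def)
        also have "\<dots> \<le> 4/A" using A1 by (simp add: divide_right_mono)
        finally show ?thesis .
      qed
      ultimately show False using ysq by simp
    qed
    then obtain v where v: "y = Some v" by auto
    define x where "x = cmod (v - b)"
    have V: "1 + (cmod v)^2 \<le> 2*A + 2*x^2"
    proof -
      have "cmod v \<le> cmod b + x" unfolding x_def by (metis add.commute diff_add_cancel norm_triangle_ineq)
      then have "(cmod v)^2 \<le> (cmod b + x)^2" by (simp add: power_mono)
      also have "\<dots> \<le> 2*(cmod b)^2 + 2*x^2"
      proof -
        have "0 \<le> (cmod b - x)^2" by simp
        then show ?thesis unfolding power2_sum power2_diff by linarith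
      qed
      finally show ?thesis unfolding A_def by simp
    qed
    have "4*x^2 / (A*(1+(cmod v)^2)) < d^2"
      using ysq unfolding v sdist_sq_SS A_def x_def by (simp add: norm_minus_commute)
    then have "4*x^2 < d^2 * (A*(1+(cmod v)^2))"
      using A1 by (simp add: divide_less_eq add_pos_nonneg)
    also have "\<dots> \<le> d^2 * (A*(2*A + 2*x^2))"
      using V A1 by (intro mult_left_mono) auto
    also have "\<dots> = 2*(d*A)^2 + 2*(d*(d*A))*x^2" by (simp add: power2_eq_square algebra_simps)
    also have "\<dots> \<le> 2*(d*A)^2 + 2*x^2"
    proof -
      have "0 \<le> d*A" using dpos A1 by simp
      then have "d*(d*A) \<le> 1" using dA d1 dpos mult_le_one[of d "d*A"] by simp
      then show ?thesis by (simp add: mult_right_mono)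
    qed
    finally have "x^2 < (d*A)^2" by simp
    then have "x < d*A" using dpos A1 power2_less_imp_less[of x "d*A"] by simp
    then show "cmod (chart (Some b) y) < e" using dA unfolding v x_def chart_def by simp
  qed
qed


lemma chart_inv_None: "chart_inv None t = iota (chart_inv (Some 0) t)"
  by (simp add: chart_inv_def iota_def)

lemma chart_None: "chart None y = chart (Some 0) (iota y)"
  by (cases y) (auto simp: chart_def iota_def)

lemma iota_Some0[simp]: "iota (Some 0) = None" and iota_None[simp]: "iota None = Some 0"
  by (simp_all add: iota_def)

lemma C1:
  assumes "e > 0"
  shows "\<exists>d>0. \<forall>y. sdist z y < d \<longrightarrow> y \<noteq> bad z \<and> cmod (chart z y) < e"
proof (cases z)
  case None
  obtain d where d: "d>0" "\<forall>y. sdist (Some 0) y < d \<longrightarrow> y \<noteq> None \<and> cmod (chart (Some 0) y) < e"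
    using C1_Some[OF assms] by blast
  have "\<forall>y. sdist z y < d \<longrightarrow> y \<noteq> bad z \<and> cmod (chart z y) < e"
  proof (intro allI impI)
    fix y assume "sdist z y < d"
    then have "sdist (Some 0) (iota y) < d" using None iota_isometry[of None y] by simp
    then have h: "iota y \<noteq> None \<and> cmod (chart (Some 0) (iota y)) < e" using d by blast
    have "y \<noteq> Some 0" using h by auto
    then show "y \<noteq> bad z \<and> cmod (chart z y) < e" using None h by (simp add: chart_None)
  qed
  then show ?thesis using d(1) by blast
qed (use C1_Some[OF assms] in auto)

lemma C2:
  assumes "e > 0"
  shows "\<exists>d>0. \<forall>t. cmod t < d \<longrightarrow> sdist z (chart_inv z t) < e"
proof (cases z)
  case None
  obtain d where d: "d>0" "\<forall>t. cmod t < d \<longrightarrow> sdist (Some 0) (chart_inv (Some 0) t) < e"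
    using C2_Some[OF assms, of 0] by blast
  have "sdist None (chart_inv None t) = sdist (Some 0) (chart_inv (Some 0) t)" for t
  proof -
    have "sdist None (chart_inv None t) = sdist (iota (Some 0)) (iota (chart_inv (Some 0) t))"
      by (simp add: chart_inv_None)
    then show ?thesis by (simp only: iota_isometry)
  qed
  then show ?thesis using d None by auto
qed (use C2_Some[OF assms] in auto)



definition rep :: "(rsphere \<Rightarrow> rsphere) \<Rightarrow> rsphere \<Rightarrow> complex \<Rightarrow> complex" where
  "rep f z = (\<lambda>t. chart (f z) (f (chart_inv z t)))"

definition LocHol :: "(rsphere \<Rightarrow> rsphere) \<Rightarrow> rsphere \<Rightarrow> bool" where
  "LocHol f z \<longleftrightarrow> (\<exists>r>0. (\<forall>t\<in>ball 0 r. f (chart_inv z t) \<noteq> bad (f z)) \<and> rep f z holomorphic_on ball 0 r)"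

lemma rep0[simp]: "rep f z 0 = 0" by (simp add: rep_def)

lemma critical_point_rep: "critical_point f z \<longleftrightarrow> deriv (rep f z) 0 = 0"
  by (simp add: critical_point_def rep_def)

lemma rep_id: "rep id z = (\<lambda>t. t)"
  by (simp add: rep_def)

lemma LocHol_id: "LocHol id z"
  unfolding LocHol_def rep_id using chart_inv_not_bad
  by (intro exI[of _ 1]) auto

lemma not_critical_id: "\<not> critical_point id z"
  by (simp add: critical_point_rep rep_id)

lemma ball_in_preimage:
  assumes "u holomorphic_on ball 0 r" "r > 0" "u 0 = 0" "s > 0"
  shows "\<exists>r'>0. r' \<le> r \<and> (\<forall>t\<in>ball 0 r'. u t \<in> ball 0 s)"
proof -
  have c: "continuous_on (ball 0 r) u" using assms(1) holomorphic_on_imp_continuous_on by blast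
  have o: "open (ball 0 r \<inter> u -` ball 0 s)"
    using continuous_open_preimage[OF c open_ball open_ball] .
  have "0 \<in> ball 0 r \<inter> u -` ball 0 s" using assms by simp
  then obtain e where e: "e > 0" "ball 0 e \<subseteq> ball 0 r \<inter> u -` ball 0 s"
    using o openE by blast
  show ?thesis
    apply (rule exI[of _ "min e r"])
    using e assms(2) by auto
qed

lemma LocHol_comp:
  assumes h: "LocHol h z" and g: "LocHol g (h z)"
  shows "LocHol (g \<circ> h) z \<and> deriv (rep (g \<circ> h) z) 0 = deriv (rep g (h z)) 0 * deriv (rep h z) 0"
proof -
  obtain rh where rh: "rh > 0" "\<forall>t\<in>ball 0 rh. h (chart_inv z t) \<noteq> bad (h z)"
    "rep h z holomorphic_on ball 0 rh" using h unfolding LocHol_def by blast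
  obtain rg where rg: "rg > 0" "\<forall>t\<in>ball 0 rg. g (chart_inv (h z) t) \<noteq> bad (g (h z))"
    "rep g (h z) holomorphic_on ball 0 rg" using g unfolding LocHol_def by blast
  define u where "u = rep h z"
  define psi where "psi = rep g (h z)"
  obtain r where r: "r > 0" "r \<le> rh" "\<forall>t\<in>ball 0 r. u t \<in> ball 0 rg"
    using ball_in_preimage[OF rh(3) rh(1) rep0 rg(1)] unfolding u_def by blast
  have hu: "h (chart_inv z t) = chart_inv (h z) (u t)" if "t \<in> ball 0 r" for t
    using rh(2) that r(2) chart_inv_chart unfolding u_def rep_def by (metis mem_ball order_less_le_trans)
  have eq: "rep (g \<circ> h) z t = (psi \<circ> u) t" if "t \<in> ball 0 r" for t
    using hu[OF that] unfolding rep_def psi_def by simp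
  have nb: "(g \<circ> h) (chart_inv z t) \<noteq> bad ((g \<circ> h) z)" if "t \<in> ball 0 r" for t
    using hu[OF that] rg(2) r(3) that by simp
  have hu_on: "u holomorphic_on ball 0 r"
  proof -
    have "ball 0 r \<subseteq> ball (0::complex) rh" using r(2) by auto
    then show ?thesis unfolding u_def by (rule holomorphic_on_subset[OF rh(3)])
  qed
  have hcomp: "(psi \<circ> u) holomorphic_on ball 0 r"
    by (rule holomorphic_on_compose_gen[OF hu_on rg(3)[folded psi_def]]) (use r(3) in auto)
  have hol: "rep (g \<circ> h) z holomorphic_on ball 0 r"
    using holomorphic_transform[OF hcomp] eq by metis
  have du: "(u has_field_derivative deriv u 0) (at 0)"
    using holomorphic_derivI[OF hu_on open_ball, of 0] r(1) by simp
  have dpsi: "(psi has_field_derivative deriv psi (u 0)) (at (u 0))"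
    using holomorphic_derivI[OF rg(3)[folded psi_def] open_ball, of "u 0"] rg(1) by (simp add: u_def)
  have "((psi \<circ> u) has_field_derivative deriv psi (u 0) * deriv u 0) (at 0)"
    by (rule DERIV_chain[OF dpsi du])
  then have "(rep (g \<circ> h) z has_field_derivative deriv psi (u 0) * deriv u 0) (at 0)"
    by (rule has_field_derivative_transform_within_open[OF _ open_ball[of 0 r]]) (use r(1) eq in auto)
  then have "deriv (rep (g \<circ> h) z) 0 = deriv psi 0 * deriv u 0"
    using DERIV_imp_deriv by (simp add: u_def)
  moreover have "LocHol (g \<circ> h) z"
    unfolding LocHol_def using r(1) nb hol by blast
  ultimately show ?thesis by (simp add: psi_def u_def)
qed

lemma critical_comp:
  assumes "LocHol h z" "LocHol g (h z)" "critical_point (g \<circ> h) z"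
  shows "critical_point h z \<or> critical_point g (h z)"
proof -
  have "deriv (rep (g \<circ> h) z) 0 = deriv (rep g (h z)) 0 * deriv (rep h z) 0"
    using LocHol_comp[OF assms(1,2)] by (rule conjunct2)
  then have "deriv (rep g (h z)) 0 * deriv (rep h z) 0 = 0"
    using assms(3) unfolding critical_point_rep by simp
  then show ?thesis unfolding critical_point_rep by (simp add: disj_commute)
qed

lemma LocHol_cont:
  assumes "LocHol f z" "e > 0"
  shows "\<exists>d>0. \<forall>y. sdist z y < d \<longrightarrow> sdist (f z) (f y) < e"
proof -
  obtain r where r: "r > 0" "\<forall>t\<in>ball 0 r. f (chart_inv z t) \<noteq> bad (f z)"
    "rep f z holomorphic_on ball 0 r" using assms(1) unfolding LocHol_def by blast
  obtain d2 where d2: "d2 > 0" "\<forall>s. cmod s < d2 \<longrightarrow> sdist (f z) (chart_inv (f z) s) < e"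
    using C2[OF assms(2)] by blast
  obtain r1 where r1: "r1 > 0" "r1 \<le> r" "\<forall>t\<in>ball 0 r1. rep f z t \<in> ball 0 d2"
    using ball_in_preimage[OF r(3) r(1) rep0 d2(1)] by blast
  obtain d where d: "d > 0" "\<forall>y. sdist z y < d \<longrightarrow> y \<noteq> bad z \<and> cmod (chart z y) < r1"
    using C1[OF r1(1)] by blast
  have "sdist (f z) (f y) < e" if y: "sdist z y < d" for y
  proof -
    define t where "t = chart z y"
    have yt: "y = chart_inv z t" using d y chart_inv_chart unfolding t_def by metis
    have tb: "t \<in> ball 0 r1" using d y unfolding t_def by simp
    then have "f y \<noteq> bad (f z)" using r(2) r1(2) yt by auto
    then have "f y = chart_inv (f z) (rep f z t)"
      unfolding rep_def yt by (simp add: chart_inv_chart)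
    moreover have "cmod (rep f z t) < d2" using r1(3) tb by simp
    ultimately show ?thesis using d2 by simp
  qed
  then show ?thesis using d(1) by blast
qed

lemma LocHol_open:
  assumes "LocHol f z" "\<forall>r>0. \<exists>t\<in>ball 0 r. rep f z t \<noteq> 0" "e > 0"
  shows "\<exists>d>0. \<forall>y. sdist (f z) y < d \<longrightarrow> (\<exists>x. sdist z x < e \<and> f x = y)"
proof -
  obtain r where r: "r > 0" "\<forall>t\<in>ball 0 r. f (chart_inv z t) \<noteq> bad (f z)"
    "rep f z holomorphic_on ball 0 r" using assms(1) unfolding LocHol_def by blast
  obtain d2 where d2: "d2 > 0" "\<forall>t. cmod t < d2 \<longrightarrow> sdist z (chart_inv z t) < e"
    using C2[OF assms(3)] by blast
  define S where "S = ball (0::complex) (min r d2)"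
  have Sr: "S \<subseteq> ball 0 r" by (auto simp: S_def)
  have hol: "rep f z holomorphic_on S" using r(3) Sr by (rule holomorphic_on_subset)
  have nc: "\<not> rep f z constant_on S"
  proof
    assume "rep f z constant_on S"
    then obtain c where c: "\<forall>x\<in>S. rep f z x = c" unfolding constant_on_def by blast
    have "0 \<in> S" using r(1) d2(1) by (simp add: S_def)
    then have "c = 0" using c by force
    moreover obtain t where "t \<in> ball 0 (min r d2)" "rep f z t \<noteq> 0"
      using assms(2) r(1) d2(1) by (meson min_less_iff_conj)
    ultimately show False using c S_def by auto
  qed
  have op: "open (rep f z ` S)"
    by (rule open_mapping_thm[OF hol _ _ _ order.refl nc]) (auto simp: S_def)
  have "0 \<in> S" using r(1) d2(1) by (simp add: S_def)
  then have "rep f z 0 \<in> rep f z ` S" by (rule imageI)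
  then have "0 \<in> rep f z ` S" by simp
  then obtain rho where rho: "rho > 0" "ball 0 rho \<subseteq> rep f z ` S"
    using op openE by blast
  obtain d where d: "d > 0" "\<forall>y. sdist (f z) y < d \<longrightarrow> y \<noteq> bad (f z) \<and> cmod (chart (f z) y) < rho"
    using C1[OF rho(1)] by blast
  have "\<exists>x. sdist z x < e \<and> f x = y" if y: "sdist (f z) y < d" for y
  proof -
    have "chart (f z) y \<in> ball 0 rho" using d y by simp
    then have "chart (f z) y \<in> rep f z ` S" using rho(2) by (rule subsetD[rotated])
    then obtain t where t: "t \<in> S" "rep f z t = chart (f z) y" by (metis imageE)
    have fx: "f (chart_inv z t) \<noteq> bad (f z)" using r(2) Sr t(1) by blast
    have "f (chart_inv z t) = chart_inv (f z) (chart (f z) (f (chart_inv z t)))"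
      using fx by (simp add: chart_inv_chart)
    also have "\<dots> = chart_inv (f z) (chart (f z) y)" using t(2) unfolding rep_def by simp
    also have "\<dots> = y" using d y by (simp add: chart_inv_chart)
    finally have "f (chart_inv z t) = y" .
    moreover have "sdist z (chart_inv z t) < e" using d2 t(1) by (simp add: S_def)
    ultimately show ?thesis by blast
  qed
  then show ?thesis using d(1) by blast
qed



lemma poly_nonzero_ball:
  fixes P :: "complex poly"
  assumes "poly P a \<noteq> 0"
  shows "\<exists>r>0. \<forall>t\<in>ball 0 r. poly P (a+t) \<noteq> 0"
proof -
  have "(\<lambda>t. poly P (a+t)) holomorphic_on UNIV" by (intro holomorphic_intros)
  then have "continuous (at 0) (\<lambda>t. poly P (a+t))"
    using holomorphic_on_imp_continuous_on continuous_on_eq_continuous_at open_UNIV by blast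
  from continuous_at_avoid[OF this] assms obtain e where "e>0" "\<forall>y. dist 0 y < e \<longrightarrow> poly P (a+y) \<noteq> 0"
    by auto
  then show ?thesis by (intro exI[of _ e]) auto
qed

lemma infinite_punctured_ball: "r > 0 \<Longrightarrow> infinite (ball (0::complex) r - {0})"
proof
  assume r: "r > 0" and f: "finite (ball (0::complex) r - {0})"
  have "open (ball (0::complex) r - {0})" by (simp add: open_delete)
  then have "ball (0::complex) r - {0} = {}" using finite_imp_not_open f by blast
  moreover have "complex_of_real (r/2) \<in> ball 0 r - {0}" using r by simp
  ultimately show False by blast
qed

lemma no_common_root:
  fixes p q :: "complex poly"
  assumes "coprime p q" "poly p a = 0" "poly q a = 0"
  shows False
proof -
  have "[:-a,1:] dvd p" "[:-a,1:] dvd q" using assms by (simp_all add: poly_eq_0_iff_dvd)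
  then have "is_unit [:-a,1:]" using assms(1) coprime_common_divisor by blast
  then show False using is_unit_iff_degree[of "[:-a,1:]"] by simp
qed

lemma q_not_vanish:
  fixes q :: "complex poly"
  assumes "q \<noteq> 0" "infinite X" "\<forall>x\<in>X. poly q x = 0"
  shows False
proof -
  have "X \<subseteq> {x. poly q x = 0}" using assms(3) by auto
  then have "finite X" using poly_roots_finite[OF assms(1)] by (rule finite_subset)
  then show False using assms(2) by simp
qed

lemma nonconst_pq:
  fixes p q :: "complex poly"
  assumes "coprime p q" "q \<noteq> 0" "max (degree p) (degree q) \<ge> 1" "infinite X"
    "\<forall>x\<in>X. poly p x = c * poly q x"
  shows False
proof -
  have "\<forall>x\<in>X. poly (p - smult c q) x = 0" using assms(5) by simp
  then have "p - smult c q = 0"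
    using q_not_vanish[OF _ assms(4)] by blast
  then have pe: "p = smult c q" by simp
  have "q dvd p" unfolding pe by (simp add: dvd_smult)
  then have "is_unit q" using assms(1) coprime_common_divisor[of p q q] by simp
  then have "degree q = 0" using is_unit_iff_degree assms(2) by blast
  moreover have "degree p \<le> degree q" using pe by simp
  ultimately show False using assms(3) by simp
qed

lemma inf_image_shift: "r > 0 \<Longrightarrow> infinite ((\<lambda>t. a + t) ` (ball (0::complex) r - {0}))"
proof -
  assume r: "r > 0"
  have "inj_on (\<lambda>t::complex. a + t) (ball 0 r - {0})" by (auto simp: inj_on_def)
  then show ?thesis using infinite_punctured_ball[OF r] finite_imageD by blast
qed

lemma inf_image_inv: "r > 0 \<Longrightarrow> infinite ((\<lambda>t. 1 / t) ` (ball (0::complex) r - {0}))"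
proof -
  assume r: "r > 0"
  have "inj_on (\<lambda>t::complex. 1/t) (ball 0 r - {0})" by (auto simp: inj_on_def)
  then show ?thesis using infinite_punctured_ball[OF r] finite_imageD by blast
qed

definition good :: "(rsphere \<Rightarrow> rsphere) \<Rightarrow> rsphere \<Rightarrow> bool" where
  "good f z \<longleftrightarrow> LocHol f z \<and> (\<forall>r>0. \<exists>t\<in>ball 0 r. rep f z t \<noteq> 0)"

lemma goodI:
  assumes r: "r > 0" and nb: "\<forall>t\<in>ball 0 r. f (chart_inv z t) \<noteq> bad (f z)"
    and eq: "\<forall>t\<in>ball 0 r. rep f z t = phi t" and hol: "phi holomorphic_on ball 0 r"
    and nc: "\<And>r'. r' > 0 \<Longrightarrow> r' \<le> r \<Longrightarrow> \<forall>t\<in>ball 0 r' - {0}. rep f z t = 0 \<Longrightarrow> False"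
  shows "good f z"
proof -
  have "rep f z holomorphic_on ball 0 r" using holomorphic_transform[OF hol] eq by metis
  then have "LocHol f z" unfolding LocHol_def using r nb by blast
  moreover have "\<exists>t\<in>ball 0 r'. rep f z t \<noteq> 0" if "r' > 0" for r'
  proof (rule ccontr)
    assume "\<not> ?thesis"
    then have "\<forall>t\<in>ball 0 (min r' r) - {0}. rep f z t = 0" by auto
    then show False using nc[of "min r' r"] r that by simp
  qed
  ultimately show ?thesis unfolding good_def by blast
qed



lemma pow_ratio:
  fixes t A B :: complex
  assumes "t \<noteq> 0" "m \<le> n"
  shows "(A / t^m) / (B / t^n) = t^(n-m) * A / B"
proof -
  have "t^n = t^(n-m) * t^m" using assms(2) by (simp add: power_add[symmetric])
  then show ?thesis using assms(1) by (simp add: field_simps)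
qed

lemma poly_inv:
  fixes p :: "complex poly"
  assumes "t \<noteq> 0"
  shows "poly p (1/t) = poly (reflect_poly p) t / t^(degree p)"
  using poly_reflect_poly_nz[OF assms, of p] assms by (simp add: field_simps inverse_eq_divide)

lemma rat_good_Some:
  fixes p q :: "complex poly"
  assumes cp: "coprime p q" and q0: "q \<noteq> 0" and dg: "max (degree p) (degree q) \<ge> 1"
  shows "good (rat_eval p q) (Some a)"
proof (cases "poly q a = 0")
  case False
  obtain r where r: "r > 0" "\<forall>t\<in>ball 0 r. poly q (a+t) \<noteq> 0"
    using poly_nonzero_ball[OF False] by blast
  define c where "c = poly p a / poly q a"
  have fz: "rat_eval p q (Some a) = Some c" using False by (simp add: rat_eval_def c_def)
  have fv: "rat_eval p q (chart_inv (Some a) t) = Some (poly p (a+t) / poly q (a+t))"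
    if "t \<in> ball 0 r" for t using r(2) that by (simp add: rat_eval_def chart_inv_def)
  show ?thesis
  proof (rule goodI[OF r(1), where phi="\<lambda>t. poly p (a+t) / poly q (a+t) - c"])
    show "\<forall>t\<in>ball 0 r. rat_eval p q (chart_inv (Some a) t) \<noteq> bad (rat_eval p q (Some a))"
      using fv fz by simp
    show "\<forall>t\<in>ball 0 r. rep (rat_eval p q) (Some a) t = poly p (a+t) / poly q (a+t) - c"
      using fv fz by (simp add: rep_def chart_def)
    show "(\<lambda>t. poly p (a+t) / poly q (a+t) - c) holomorphic_on ball 0 r"
      by (intro holomorphic_intros) (use r(2) in auto)
  next
    fix r' assume r': "r' > 0" "r' \<le> r" "\<forall>t\<in>ball 0 r' - {0}. rep (rat_eval p q) (Some a) t = 0"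
    have "\<forall>x\<in>(\<lambda>t. a + t) ` (ball 0 r' - {0}). poly p x = c * poly q x"
    proof
      fix x assume "x \<in> (\<lambda>t. a + t) ` (ball 0 r' - {0})"
      then obtain t where t: "t \<in> ball 0 r' - {0}" "x = a + t" by blast
      have tb: "t \<in> ball 0 r" using t r' by auto
      have "rep (rat_eval p q) (Some a) t = 0" using r'(3) t(1) by blast
      then have "poly p (a+t) / poly q (a+t) - c = 0"
        using fv[OF tb] fz by (simp add: rep_def chart_def)
      moreover have "poly q (a+t) \<noteq> 0" using r(2) tb by blast
      ultimately show "poly p x = c * poly q x" using t(2) by (simp add: field_simps)
    qed
    then show False using nonconst_pq[OF cp q0 dg inf_image_shift[OF r'(1)]] by blast
  qed
next
  case True
  have pa: "poly p a \<noteq> 0" using no_common_root[OF cp _ True] by blast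
  obtain r where r: "r > 0" "\<forall>t\<in>ball 0 r. poly p (a+t) \<noteq> 0"
    using poly_nonzero_ball[OF pa] by blast
  have fz: "rat_eval p q (Some a) = None" using True by (simp add: rat_eval_def)
  have rv: "rep (rat_eval p q) (Some a) t = poly q (a+t) / poly p (a+t)"
    if "t \<in> ball 0 r" for t using r(2) that fz by (simp add: rep_def rat_eval_def chart_inv_def chart_def)
  show ?thesis
  proof (rule goodI[OF r(1), where phi="\<lambda>t. poly q (a+t) / poly p (a+t)"])
    show "\<forall>t\<in>ball 0 r. rat_eval p q (chart_inv (Some a) t) \<noteq> bad (rat_eval p q (Some a))"
      using r(2) fz by (simp add: rat_eval_def chart_inv_def)
    show "\<forall>t\<in>ball 0 r. rep (rat_eval p q) (Some a) t = poly q (a+t) / poly p (a+t)"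
      using rv by blast
    show "(\<lambda>t. poly q (a+t) / poly p (a+t)) holomorphic_on ball 0 r"
      by (intro holomorphic_intros) (use r(2) in auto)
  next
    fix r' assume r': "r' > 0" "r' \<le> r" "\<forall>t\<in>ball 0 r' - {0}. rep (rat_eval p q) (Some a) t = 0"
    have "\<forall>x\<in>(\<lambda>t. a + t) ` (ball 0 r' - {0}). poly q x = 0"
    proof
      fix x assume "x \<in> (\<lambda>t. a + t) ` (ball 0 r' - {0})"
      then obtain t where t: "t \<in> ball 0 r' - {0}" "x = a + t" by blast
      have tb: "t \<in> ball 0 r" using t r' by auto
      have "rep (rat_eval p q) (Some a) t = 0" using r'(3) t(1) by blast
      then have "poly q (a+t) / poly p (a+t) = 0" using rv[OF tb] by simp
      then show "poly q x = 0" using r(2) tb t(2) by simp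
    qed
    then show False using q_not_vanish[OF q0 inf_image_shift[OF r'(1)]] by blast
  qed
qed



lemma p_nonzero:
  fixes p q :: "complex poly"
  assumes cp: "coprime p q" and dg: "max (degree p) (degree q) \<ge> 1"
  shows "p \<noteq> 0"
proof
  assume p0: "p = 0"
  then have "is_unit q" using cp by simp
  then have "degree q = 0" using is_unit_iff_degree[of q] by fastforce
  then show False using dg p0 by simp
qed

lemma chart_inv_None_eq: "chart_inv None t = (if t = 0 then None else Some (1/t))"
  by (simp add: chart_inv_def)

lemma rat_good_None:
  fixes p q :: "complex poly"
  assumes cp: "coprime p q" and q0: "q \<noteq> 0" and dg: "max (degree p) (degree q) \<ge> 1"
  shows "good (rat_eval p q) None"
proof -
  have p0: "p \<noteq> 0" by (rule p_nonzero[OF cp dg])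
  define P where "P = reflect_poly p"
  define Q where "Q = reflect_poly q"
  have P0: "poly P 0 = lead_coeff p" by (simp add: P_def poly_0_coeff_0)
  have Q0: "poly Q 0 = lead_coeff q" by (simp add: Q_def poly_0_coeff_0)
  have lp: "lead_coeff p \<noteq> 0" "lead_coeff q \<noteq> 0" using p0 q0 by auto
  have pinv: "poly p (1/t) = poly P t / t^(degree p)" if "t \<noteq> 0" for t
    using poly_inv[OF that] by (simp add: P_def)
  have qinv: "poly q (1/t) = poly Q t / t^(degree q)" if "t \<noteq> 0" for t
    using poly_inv[OF that] by (simp add: Q_def)
  show ?thesis
  proof (cases "degree p \<le> degree q")
    case le: True
    define c where "c = (if degree p = degree q then lead_coeff p / lead_coeff q else 0)"
    have fz: "rat_eval p q None = Some c" using le by (auto simp: rat_eval_def c_def)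
    obtain r where r: "r > 0" "\<forall>t\<in>ball 0 r. poly Q (0+t) \<noteq> 0"
      using poly_nonzero_ball[of Q 0] Q0 lp by auto
    define phi where "phi = (\<lambda>t. t^(degree q - degree p) * poly P t / poly Q t - c)"
    have fv: "rat_eval p q (chart_inv None t) = Some (phi t + c) \<and> rep (rat_eval p q) None t = phi t"
      if tb: "(t::complex) \<in> ball 0 r" for t
    proof (cases "t = 0")
      case True
      have "phi 0 = 0"
      proof (cases "degree p = degree q")
        case True then show ?thesis using P0 Q0 lp by (simp add: phi_def c_def)
      next
        case False then show ?thesis using le by (simp add: phi_def c_def)
      qed
      then show ?thesis using True fz by (simp add: rep_def)
    next
      case False
      have Qt: "poly Q t \<noteq> 0" using r(2) tb by simp
      have qt: "poly q (1/t) \<noteq> 0" using qinv[OF False] Qt False by simp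
      have "poly p (1/t) / poly q (1/t) = t^(degree q - degree p) * poly P t / poly Q t"
        unfolding pinv[OF False] qinv[OF False] by (rule pow_ratio[OF False le])
      then have e: "poly p (1/t) / poly q (1/t) = phi t + c" by (simp add: phi_def)
      have "rat_eval p q (chart_inv None t) = Some (phi t + c)"
        using False qt e by (simp add: chart_inv_None_eq rat_eval_def)
      then show ?thesis using fz by (simp add: rep_def chart_def)
    qed
    show ?thesis
    proof (rule goodI[OF r(1), where phi=phi])
      show "\<forall>t\<in>ball 0 r. rat_eval p q (chart_inv None t) \<noteq> bad (rat_eval p q None)"
        using fv fz by simp
      show "\<forall>t\<in>ball 0 r. rep (rat_eval p q) None t = phi t" using fv by blast
      show "phi holomorphic_on ball 0 r" unfolding phi_def
        by (intro holomorphic_intros) (use r(2) in auto)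
    next
      fix r' assume r': "r' > 0" "r' \<le> r" "\<forall>t\<in>ball 0 r' - {0}. rep (rat_eval p q) None t = 0"
      have "\<forall>x\<in>(\<lambda>t. 1 / t) ` (ball 0 r' - {0}). poly p x = c * poly q x"
      proof
        fix x :: complex assume "x \<in> (\<lambda>t. 1 / t) ` (ball 0 r' - {0})"
        then obtain t :: complex where t: "t \<in> ball 0 r' - {0}" "x = 1 / t" by blast
        have tb: "t \<in> ball 0 r" using t r' by auto
        have "rep (rat_eval p q) None t = 0" using r'(3) t(1) by blast
        then have ph: "phi t = 0" using fv[OF tb] by simp
        have t0: "t \<noteq> 0" using t by simp
        have Qt: "poly Q t \<noteq> 0" using r(2) tb by simp
        have qt: "poly q (1/t) \<noteq> 0" using qinv[OF t0] Qt t0 by simp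
        have "poly p (1/t) / poly q (1/t) = t^(degree q - degree p) * poly P t / poly Q t"
          unfolding pinv[OF t0] qinv[OF t0] by (rule pow_ratio[OF t0 le])
        then have "poly p (1/t) / poly q (1/t) = c" using ph by (simp add: phi_def)
        then show "poly p x = c * poly q x" using qt t(2) by (simp add: field_simps)
      qed
      then show False using nonconst_pq[OF cp q0 dg inf_image_inv[OF r'(1)]] by blast
    qed
  next
    case gt: False
    have fz: "rat_eval p q None = None" using gt by (simp add: rat_eval_def)
    obtain r where r: "r > 0" "\<forall>t\<in>ball 0 r. poly P (0+t) \<noteq> 0"
      using poly_nonzero_ball[of P 0] P0 lp by auto
    define phi where "phi = (\<lambda>t. t^(degree p - degree q) * poly Q t / poly P t)"
    have fv: "rat_eval p q (chart_inv None t) \<noteq> Some 0 \<and> rep (rat_eval p q) None t = phi t"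
      if tb: "(t::complex) \<in> ball 0 r" for t
    proof (cases "t = 0")
      case True
      have "phi 0 = 0" using gt by (simp add: phi_def)
      then show ?thesis using True fz by (simp add: rep_def)
    next
      case False
      have Pt: "poly P t \<noteq> 0" using r(2) tb by simp
      have pt: "poly p (1/t) \<noteq> 0" using pinv[OF False] Pt False by simp
      have le2: "degree q \<le> degree p" using gt by simp
      show ?thesis
      proof (cases "poly q (1/t) = 0")
        case True
        have "poly Q t = 0" using qinv[OF False] True False by simp
        then have "phi t = 0" by (simp add: phi_def)
        then show ?thesis using True False fz by (simp add: rep_def chart_inv_None_eq rat_eval_def chart_def)
      next
        case qn: False
        have "poly q (1/t) / poly p (1/t) = t^(degree p - degree q) * poly Q t / poly P t"
          unfolding pinv[OF False] qinv[OF False] by (rule pow_ratio[OF False le2])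
        then have e: "poly q (1/t) / poly p (1/t) = phi t" by (simp add: phi_def)
        have "rat_eval p q (chart_inv None t) = Some (poly p (1/t) / poly q (1/t))"
          using False qn by (simp add: chart_inv_None_eq rat_eval_def)
        then show ?thesis using fz e pt qn by (simp add: rep_def chart_def)
      qed
    qed
    show ?thesis
    proof (rule goodI[OF r(1), where phi=phi])
      show "\<forall>t\<in>ball 0 r. rat_eval p q (chart_inv None t) \<noteq> bad (rat_eval p q None)"
        using fv fz by simp
      show "\<forall>t\<in>ball 0 r. rep (rat_eval p q) None t = phi t" using fv by blast
      show "phi holomorphic_on ball 0 r" unfolding phi_def
        by (intro holomorphic_intros) (use r(2) in auto)
    next
      fix r' assume r': "r' > 0" "r' \<le> r" "\<forall>t\<in>ball 0 r' - {0}. rep (rat_eval p q) None t = 0"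
      have "\<forall>x\<in>(\<lambda>t. 1 / t) ` (ball 0 r' - {0}). poly q x = 0"
      proof
        fix x :: complex assume "x \<in> (\<lambda>t. 1 / t) ` (ball 0 r' - {0})"
        then obtain t :: complex where t: "t \<in> ball 0 r' - {0}" "x = 1 / t" by blast
        have tb: "t \<in> ball 0 r" using t r' by auto
        have "rep (rat_eval p q) None t = 0" using r'(3) t(1) by blast
        then have ph: "phi t = 0" using fv[OF tb] by simp
        have t0: "t \<noteq> 0" using t by simp
        have Pt: "poly P t \<noteq> 0" using r(2) tb by simp
        have "poly Q t = 0" using ph Pt t0 by (simp add: phi_def)
        then show "poly q x = 0" using qinv[OF t0] t(2) by simp
      qed
      then show False using q_not_vanish[OF q0 inf_image_inv[OF r'(1)]] by blast
    qed
  qed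
qed

lemma rat_good:
  fixes p q :: "complex poly"
  assumes "coprime p q" "q \<noteq> 0" "max (degree p) (degree q) \<ge> 1"
  shows "good (rat_eval p q) z"
  using rat_good_None[OF assms] rat_good_Some[OF assms] by (cases z) auto

lemma rat_map_good:
  assumes "rat_map_of_degree f d" "d \<ge> 1"
  shows "good f z"
  using assms rat_good unfolding rat_map_of_degree_def by blast



definition scont :: "(rsphere \<Rightarrow> rsphere) \<Rightarrow> bool" where
  "scont g \<longleftrightarrow> (\<forall>z e. e > 0 \<longrightarrow> (\<exists>d>0. \<forall>y. sdist z y < d \<longrightarrow> sdist (g z) (g y) < e))"

lemma sclosure_iff: "z \<in> sclosure A \<longleftrightarrow> (\<forall>e>0. \<exists>a\<in>A. sdist z a < e)"
  unfolding sclosure_def closure_approachable by (auto simp: sdist_def dist_commute)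

lemma sclosure_sub: "A \<subseteq> sclosure A"
proof
  fix z assume z: "z \<in> A"
  have "\<forall>e>0. \<exists>a\<in>A. sdist z a < e"
  proof (intro allI impI)
    fix e :: real assume "e > 0"
    then show "\<exists>a\<in>A. sdist z a < e" using z by (intro bexI[of _ z]) auto
  qed
  then show "z \<in> sclosure A" by (simp only: sclosure_iff)
qed

lemma sclosure_mono: "A \<subseteq> B \<Longrightarrow> sclosure A \<subseteq> sclosure B"
  unfolding sclosure_def by (auto dest: closure_mono[OF image_mono])

lemma sclosure_idem: "sclosure (sclosure A) \<subseteq> sclosure A"
proof
  fix z assume z: "z \<in> sclosure (sclosure A)"
  show "z \<in> sclosure A" unfolding sclosure_iff
  proof (intro allI impI)
    fix e :: real assume e: "e > 0"
    have e2: "e/2 > 0" using e by simp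
    obtain b where b: "b \<in> sclosure A" "sdist z b < e/2"
      using z e2 sclosure_iff[of z "sclosure A"] by blast
    obtain a where a: "a \<in> A" "sdist b a < e/2" using b(1) e2 sclosure_iff[of b A] by blast
    have "sdist z a < e" using sdist_triangle[of z a b] a b by simp
    then show "\<exists>a\<in>A. sdist z a < e" using a(1) by blast
  qed
qed

lemma scont_image_sclosure:
  assumes "scont g"
  shows "g ` sclosure A \<subseteq> sclosure (g ` A)"
proof
  fix w assume "w \<in> g ` sclosure A"
  then obtain z where z: "z \<in> sclosure A" "w = g z" by blast
  show "w \<in> sclosure (g ` A)" unfolding sclosure_iff
  proof (intro allI impI)
    fix e :: real assume e: "e > 0"
    obtain d where d: "d > 0" "\<forall>y. sdist z y < d \<longrightarrow> sdist (g z) (g y) < e"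
      using assms e unfolding scont_def by blast
    obtain a where "a \<in> A" "sdist z a < d" using z(1) d(1) unfolding sclosure_iff by blast
    then show "\<exists>b\<in>g ` A. sdist w b < e" using d z(2) by blast
  qed
qed

lemma stereo_inj: "stereo z = stereo w \<Longrightarrow> z = w"
proof -
  have snd_lt: "snd (stereo (Some x)) < 1" for x
    by (simp add: stereo_def add_pos_nonneg)
  have sndN: "snd (stereo None) = 1" by (simp add: stereo_def)
  assume e: "stereo z = stereo w"
  show "z = w"
  proof (cases z)
    case None
    show ?thesis
    proof (cases w)
      case (Some y)
      then have "snd (stereo z) < 1" using e snd_lt by simp
      then show ?thesis using None sndN by simp
    qed (use None in simp)
  next
    case (Some x)
    note zx = Some
    show ?thesis
    proof (cases w)
      case None
      have "snd (stereo w) < 1" using e snd_lt[of x] zx by metis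
      then show ?thesis using None sndN by simp
    next
      case (Some y)
      define X where "X = (cmod x)^2"
      define Y where "Y = (cmod y)^2"
      have X0: "X \<ge> 0" "Y \<ge> 0" by (simp_all add: X_def Y_def)
      have s2: "(X - 1)/(1 + X) = (Y - 1)/(1+Y)"
        using e zx Some by (simp add: stereo_def X_def Y_def)
      then have "(X - 1)*(1+Y) = (Y-1)*(1+X)" using X0 by (simp add: field_simps add_pos_nonneg)
      then have XY: "X = Y" by (simp add: algebra_simps)
      have "2*x / complex_of_real (1+X) = 2*y / complex_of_real (1+Y)"
        using e zx Some by (simp add: stereo_def X_def Y_def)
      moreover have "complex_of_real (1+X) \<noteq> 0"
      proof -
        have "1 + X \<noteq> 0" using X0 by simp
        then show ?thesis using of_real_eq_0_iff by blast
      qed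
      ultimately have "x = y" using XY by simp
      then show ?thesis using zx Some by simp
    qed
  qed
qed

lemma scompact_closed_subset:
  assumes "scompact K" "M \<subseteq> K" "sclosure M \<subseteq> M"
  shows "scompact M"
proof -
  have cK: "closed (stereo ` K)" using assms(1) compact_imp_closed unfolding scompact_def by blast
  have "closure (stereo ` M) \<subseteq> stereo ` M"
  proof
    fix y assume y: "y \<in> closure (stereo ` M)"
    have "closure (stereo ` M) \<subseteq> stereo ` K"
      using closure_mono[OF image_mono[OF assms(2)]] cK closure_closed by metis
    then obtain k where k: "y = stereo k" using y by blast
    then have "k \<in> sclosure M" using y by (simp add: sclosure_def)
    then show "y \<in> stereo ` M" using assms(3) k by blast
  qed
  then have "closed (stereo ` M)" using closure_subset_eq by blast
  moreover have "stereo ` M = stereo ` K \<inter> stereo ` M" using assms(2) by blast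
  ultimately show ?thesis using assms(1) compact_Int_closed unfolding scompact_def by metis
qed



definition invar :: "(rsphere \<Rightarrow> rsphere) set \<Rightarrow> rsphere set \<Rightarrow> rsphere set set" where
  "invar G K = {S. S \<subseteq> K \<and> S \<noteq> {} \<and> sclosure S \<subseteq> S \<and> (\<forall>g\<in>G. g ` S \<subseteq> S)}"

lemma chain_inter_in_invar:
  assumes K: "scompact K" and C: "C \<subseteq> invar G K" "C \<noteq> {}" "chain\<^sub>\<subseteq> C"
  shows "\<Inter>C \<in> invar G K"
proof -
  obtain S0 where S0: "S0 \<in> C" using C(2) by blast
  have sub: "\<Inter>C \<subseteq> K" using S0 C(1) unfolding invar_def by blast
  have cl: "sclosure (\<Inter>C) \<subseteq> \<Inter>C"
  proof -
    have "sclosure (\<Inter>C) \<subseteq> S" if "S \<in> C" for S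
    proof -
      have "sclosure (\<Inter>C) \<subseteq> sclosure S" using that by (intro sclosure_mono) blast
      also have "\<dots> \<subseteq> S" using that C(1) unfolding invar_def by blast
      finally show ?thesis .
    qed
    then show ?thesis by blast
  qed
  have inv: "\<forall>g\<in>G. g ` \<Inter>C \<subseteq> \<Inter>C"
  proof (intro ballI subsetI)
    fix g y assume g: "g \<in> G" and y: "y \<in> g ` \<Inter>C"
    then obtain x where x: "x \<in> \<Inter>C" "y = g x" by blast
    show "y \<in> \<Inter>C"
    proof
      fix S assume S: "S \<in> C"
      then have "g ` S \<subseteq> S" using C(1) g unfolding invar_def by blast
      moreover have "x \<in> S" using x(1) S by blast
      ultimately show "y \<in> S" using x(2) by blast
    qed
  qed
  have comp: "compact (stereo ` S)" if "S \<in> C" for S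
  proof -
    have "S \<in> invar G K" using that C(1) by blast
    then have "S \<subseteq> K" "sclosure S \<subseteq> S" unfolding invar_def by auto
    then have "scompact S" by (rule scompact_closed_subset[OF K])
    then show ?thesis unfolding scompact_def .
  qed
  have "\<Inter>((\<lambda>S. stereo ` S) ` C) \<noteq> {}"
  proof (rule compact_chain)
    show "compact T" if "T \<in> (\<lambda>S. stereo ` S) ` C" for T using that comp by blast
    show "{} \<notin> (\<lambda>S. stereo ` S) ` C" using C(1) unfolding invar_def by blast
    show "T \<subseteq> T' \<or> T' \<subseteq> T" if TT: "T \<in> (\<lambda>S. stereo ` S) ` C \<and> T' \<in> (\<lambda>S. stereo ` S) ` C" for T T'
    proof -
      obtain S S' where "S \<in> C" "S' \<in> C" "T = stereo ` S" "T' = stereo ` S'" using TT by blast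
      moreover have "S \<subseteq> S' \<or> S' \<subseteq> S" using calculation(1,2) C(3) unfolding chain_subset_def by blast
      ultimately show ?thesis using image_mono by metis
    qed
  qed
  then obtain y where y: "\<forall>S\<in>C. y \<in> stereo ` S" by blast
  then obtain x0 where x0: "x0 \<in> S0" "y = stereo x0" using S0 by blast
  have "x0 \<in> S" if "S \<in> C" for S
  proof -
    have "y \<in> stereo ` S" using y that by blast
    then obtain x where xS: "x \<in> S" and xy: "y = stereo x" by (rule imageE)
    have "stereo x = stereo x0" using xy x0(2) by simp
    then have "x = x0" by (rule stereo_inj)
    then show ?thesis using xS by simp
  qed
  then have "\<Inter>C \<noteq> {}" by blast
  then show ?thesis using sub cl inv unfolding invar_def by blast
qed

lemma exists_minimal:
  assumes K: "scompact K" "K \<noteq> {}" "sclosure K \<subseteq> K" "\<forall>g\<in>G. g ` K \<subseteq> K"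
    and G: "G \<noteq> {}" "\<forall>g\<in>G. scont g" "\<forall>g\<in>G. \<forall>h\<in>G. g \<circ> h \<in> G"
  shows "\<exists>M. M \<subseteq> K \<and> minimal_set G M"
proof -
  define A where "A = invar G K"
  have KA: "K \<in> A" using K unfolding A_def invar_def by blast
  define A' where "A' = {X. - X \<in> A}"
  have "\<exists>M'\<in>A'. \<forall>X\<in>A'. M' \<subseteq> X \<longrightarrow> X = M'"
  proof (rule Zorn_Lemma2, intro ballI)
    fix C assume C: "C \<in> chains A'"
    show "\<exists>U\<in>A'. \<forall>X\<in>C. X \<subseteq> U"
    proof (cases "C = {}")
      case True
      have "- K \<in> A'" using KA unfolding A'_def by simp
      then show ?thesis using True by blast
    next
      case False
      define C' where "C' = uminus ` C"
      have "C' \<subseteq> A" using C unfolding C'_def A'_def chains_def by auto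
      moreover have "C' \<noteq> {}" using False unfolding C'_def by blast
      moreover have "chain\<^sub>\<subseteq> C'" using C unfolding C'_def chains_def chain_subset_def by auto
      ultimately have "\<Inter>C' \<in> A" using chain_inter_in_invar[OF K(1)] unfolding A_def by blast
      then have "- \<Inter>C' \<in> A'" unfolding A'_def by simp
      moreover have "\<forall>X\<in>C. X \<subseteq> - \<Inter>C'" unfolding C'_def by auto
      ultimately show ?thesis by blast
    qed
  qed
  then obtain M' where M': "M' \<in> A'" "\<forall>X\<in>A'. M' \<subseteq> X \<longrightarrow> X = M'" by blast
  define M where "M = - M'"
  have MA: "M \<in> A" using M'(1) unfolding M_def A'_def by simp
  have Mmin: "X = M" if "X \<in> A" "X \<subseteq> M" for X
  proof -
    have "- X \<in> A'" using that(1) unfolding A'_def by simp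
    moreover have "M' \<subseteq> - X" using that(2) unfolding M_def by blast
    ultimately have "- X = M'" using M'(2) by blast
    then show ?thesis unfolding M_def by auto
  qed
  have Mp: "M \<subseteq> K" "M \<noteq> {}" "sclosure M \<subseteq> M" "\<forall>g\<in>G. g ` M \<subseteq> M"
    using MA unfolding A_def invar_def by blast+
  have "M = sclosure {h z | h. h \<in> G}" if z: "z \<in> M" for z
  proof -
    define S where "S = sclosure {h z | h. h \<in> G}"
    have orb: "{h z | h. h \<in> G} \<subseteq> M" using Mp(4) z by blast
    have SM: "S \<subseteq> M" unfolding S_def using sclosure_mono[OF orb] Mp(3) by blast
    have "S \<in> A" unfolding A_def invar_def
    proof (intro CollectI conjI)
      show "S \<subseteq> K" using SM Mp(1) by blast
      obtain g where "g \<in> G" using G(1) by blast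
      then have "g z \<in> {h z | h. h \<in> G}" by blast
      then have "g z \<in> S" unfolding S_def by (rule subsetD[OF sclosure_sub])
      then show "S \<noteq> {}" by blast
      show "sclosure S \<subseteq> S" unfolding S_def by (rule sclosure_idem)
      show "\<forall>g\<in>G. g ` S \<subseteq> S"
      proof
        fix g assume g: "g \<in> G"
        have "g ` S \<subseteq> sclosure (g ` {h z | h. h \<in> G})"
          unfolding S_def by (rule scont_image_sclosure) (use G(2) g in blast)
        also have "\<dots> \<subseteq> S"
        proof -
          have "g ` {h z | h. h \<in> G} \<subseteq> {h z | h. h \<in> G}"
          proof
            fix w assume "w \<in> g ` {h z | h. h \<in> G}"
            then obtain h where h: "h \<in> G" "w = g (h z)" by blast
            then have "g \<circ> h \<in> G" using G(3) g by blast
            moreover have "w = (g \<circ> h) z" using h(2) by simp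
            ultimately show "w \<in> {h z | h. h \<in> G}" by blast
          qed
          then show ?thesis unfolding S_def by (rule sclosure_mono)
        qed
        finally show "g ` S \<subseteq> S" .
      qed
    qed
    then show ?thesis using Mmin SM unfolding S_def by blast
  qed
  moreover have "scompact M" using scompact_closed_subset[OF K(1) Mp(1) Mp(3)] .
  ultimately have "minimal_set G M" unfolding minimal_set_def using Mp(2) by blast
  then show ?thesis using Mp(1) by blast
qed



lemma gen_semigroup_sub:
  assumes "S \<subseteq> gen_semigroup T"
  shows "gen_semigroup S \<subseteq> gen_semigroup T"
proof
  fix h assume "h \<in> gen_semigroup S"
  then show "h \<in> gen_semigroup T"
  proof (induction rule: gen_semigroup.induct)
    case (gen h) then show ?case using assms by blast
  next
    case (comp h1 h2) from comp.IH show ?case by (rule gen_semigroup.comp)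
  qed
qed

definition valid :: "('a \<Rightarrow> 'a) list \<Rightarrow> nat list \<Rightarrow> bool" where
  "valid gs ws \<longleftrightarrow> set ws \<subseteq> {..<length gs}"

lemma valid_Cons: "valid gs (i # ws) \<longleftrightarrow> i < length gs \<and> valid gs ws"
  by (auto simp: valid_def)

lemma word_in:
  "valid gs ws \<Longrightarrow> ws \<noteq> [] \<Longrightarrow> word_map gs ws \<in> gen_semigroup (set gs)"
proof (induction ws)
  case Nil then show ?case by simp
next
  case (Cons i ws)
  have gi: "gs ! i \<in> gen_semigroup (set gs)" using Cons.prems
    by (intro gen_semigroup.gen) (simp add: valid_Cons)
  show ?case
  proof (cases "ws = []")
    case True then show ?thesis using gi by simp
  next
    case False
    then have "word_map gs ws \<in> gen_semigroup (set gs)" using Cons by (simp add: valid_Cons)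
    then have "word_map gs ws \<circ> gs ! i \<in> gen_semigroup (set gs)" using gi by (rule gen_semigroup.comp)
    then show ?thesis by (simp only: word_map.simps)
  qed
qed

lemma word_in': "valid gs ws \<Longrightarrow> word_map gs ws \<in> insert id (gen_semigroup (set gs))"
  using word_in[of gs ws] by (cases "ws = []") auto

lemma H_LocHol:
  assumes "\<forall>g\<in>S. \<forall>z. LocHol g z" "h \<in> gen_semigroup S"
  shows "\<forall>z. LocHol h z"
  using assms(2)
proof (induction rule: gen_semigroup.induct)
  case (gen h) then show ?case using assms(1) by blast
next
  case (comp h1 h2)
  then show ?case using LocHol_comp by blast
qed

lemma LocHol_scont: "\<forall>z. LocHol h z \<Longrightarrow> scont h"
  unfolding scont_def using LocHol_cont by blast

lemma word_crit:
  assumes L: "\<forall>g\<in>set gs. \<forall>z. LocHol g z"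
  shows "valid gs ws \<Longrightarrow> critical_point (word_map gs ws) z \<Longrightarrow>
    \<exists>h\<in>insert id (gen_semigroup (set gs)). \<exists>v\<in>critical_values gs. word_map gs ws z = h v"
proof (induction ws arbitrary: z)
  case Nil
  have "critical_point id z" using Nil.prems(2) by (simp only: word_map.simps)
  then show ?case using not_critical_id by blast
next
  case (Cons i ws)
  have i: "i < length gs" "valid gs ws" using Cons.prems(1) by (simp_all add: valid_Cons)
  have gi: "gs ! i \<in> set gs" using i(1) by simp
  have Lg: "LocHol (gs ! i) z" using L gi by blast
  have Lw: "\<forall>y. LocHol (word_map gs ws) y"
  proof -
    have "word_map gs ws = id \<or> word_map gs ws \<in> gen_semigroup (set gs)" using word_in'[OF i(2)] by simp
    then show ?thesis
    proof
      assume "word_map gs ws = id" then show ?thesis using LocHol_id by simp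
    next
      assume "word_map gs ws \<in> gen_semigroup (set gs)" then show ?thesis by (rule H_LocHol[OF L])
    qed
  qed
  have "critical_point (word_map gs ws \<circ> gs ! i) z" using Cons.prems(2) by (simp only: word_map.simps)
  then have "critical_point (gs ! i) z \<or> critical_point (word_map gs ws) ((gs ! i) z)"
    by (rule critical_comp[OF Lg Lw[rule_format]])
  then show ?case
  proof
    assume c: "critical_point (gs ! i) z"
    then have "(gs ! i) z \<in> critical_values gs" unfolding critical_values_def using gi by blast
    moreover have "word_map gs (i # ws) z = word_map gs ws ((gs ! i) z)" by simp
    ultimately show ?thesis using word_in'[OF i(2)] by blast
  next
    assume "critical_point (word_map gs ws) ((gs ! i) z)"
    then show ?thesis using Cons.IH[OF i(2)] by simp
  qed
qed

definition sopen :: "(rsphere \<Rightarrow> rsphere) \<Rightarrow> bool" where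
  "sopen g \<longleftrightarrow> (\<forall>z e. e > 0 \<longrightarrow> (\<exists>d>0. \<forall>y. sdist (g z) y < d \<longrightarrow> (\<exists>x. sdist z x < e \<and> g x = y)))"

lemma good_sopen: "\<forall>z. good g z \<Longrightarrow> sopen g"
  unfolding sopen_def
proof (intro allI impI)
  fix z and e :: real assume g: "\<forall>z. good g z" and e: "e > 0"
  have "LocHol g z" "\<forall>r>0. \<exists>t\<in>ball 0 r. rep g z t \<noteq> 0" using g unfolding good_def by blast+
  then show "\<exists>d>0. \<forall>y. sdist (g z) y < d \<longrightarrow> (\<exists>x. sdist z x < e \<and> g x = y)"
    using LocHol_open e by blast
qed

lemma equicont_forward:
  assumes op: "sopen g" and comp: "\<forall>k\<in>H. k \<circ> g \<in> H" and eq: "equicont_at H x"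
  shows "equicont_at H (g x)"
  unfolding equicont_at_def
proof (intro allI impI)
  fix e :: real assume e: "e > 0"
  obtain d1 where d1: "d1 > 0" "\<forall>y. sdist x y < d1 \<longrightarrow> (\<forall>h\<in>H. sdist (h x) (h y) < e)"
    using eq e unfolding equicont_at_def by blast
  obtain d where d: "d > 0" "\<forall>y. sdist (g x) y < d \<longrightarrow> (\<exists>x'. sdist x x' < d1 \<and> g x' = y)"
    using op d1(1) unfolding sopen_def by blast
  have "\<forall>h\<in>H. sdist (h (g x)) (h y) < e" if y: "sdist (g x) y < d" for y
  proof
    fix h assume h: "h \<in> H"
    obtain x' where x': "sdist x x' < d1" "g x' = y" using d y by blast
    have hg: "h \<circ> g \<in> H" using comp h by blast
    have "sdist ((h \<circ> g) x) ((h \<circ> g) x') < e" using d1(2)[rule_format, OF x'(1) hg] .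
    then show "sdist (h (g x)) (h y) < e" using x'(2) by simp
  qed
  then show "\<exists>d>0. \<forall>y. sdist (g x) y < d \<longrightarrow> (\<forall>h\<in>H. sdist (h (g x)) (h y) < e)"
    using d(1) by blast
qed

lemma fatou_forward:
  assumes op: "sopen g" and comp: "\<forall>k\<in>H. k \<circ> g \<in> H" and x: "x \<in> fatou H"
  shows "g x \<in> fatou H"
proof -
  obtain r where r: "r > 0" "\<forall>x'. sdist x x' < r \<longrightarrow> equicont_at H x'"
    using x unfolding fatou_def by blast
  obtain d where d: "d > 0" "\<forall>y. sdist (g x) y < d \<longrightarrow> (\<exists>x'. sdist x x' < r \<and> g x' = y)"
    using op r(1) unfolding sopen_def by blast
  have "equicont_at H y" if yy: "sdist (g x) y < d" for y
  proof -
    obtain x' where x': "sdist x x' < r" "g x' = y" using d yy by blast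
    have "equicont_at H x'" using r(2) x'(1) by blast
    then have "equicont_at H (g x')" by (rule equicont_forward[OF op comp])
    then show ?thesis using x'(2) by simp
  qed
  then show ?thesis unfolding fatou_def using d(1) by blast
qed

lemma julia_backward:
  assumes G: "\<forall>g\<in>set gs. sopen g"
  shows "valid gs ws \<Longrightarrow> word_map gs ws x \<in> julia (gen_semigroup (set gs)) \<Longrightarrow> x \<in> julia (gen_semigroup (set gs))"
proof (induction ws arbitrary: x)
  case Nil then show ?case by simp
next
  case (Cons i ws)
  have i: "i < length gs" "valid gs ws" using Cons.prems(1) by (simp_all add: valid_Cons)
  have "(gs ! i) x \<in> julia (gen_semigroup (set gs))" using Cons by (simp add: valid_Cons)
  moreover have "sopen (gs ! i)" using G i(1) by simp
  moreover have "\<forall>k\<in>gen_semigroup (set gs). k \<circ> (gs ! i) \<in> gen_semigroup (set gs)"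
  proof
    fix k assume k: "k \<in> gen_semigroup (set gs)"
    have "gs ! i \<in> gen_semigroup (set gs)" using i(1) by (intro gen_semigroup.gen) simp
    then show "k \<circ> (gs ! i) \<in> gen_semigroup (set gs)" by (rule gen_semigroup.comp[OF k])
  qed
  ultimately show ?case using fatou_forward unfolding julia_def by blast
qed

lemma words_eq:
  assumes G: "\<forall>g\<in>set gs. sopen g" and A2: "A2 gs"
  shows "valid gs w1 \<Longrightarrow> valid gs w2 \<Longrightarrow> length w1 = length w2 \<Longrightarrow>
    word_map gs w1 z \<in> julia (gen_semigroup (set gs)) \<Longrightarrow>
    word_map gs w2 z \<in> julia (gen_semigroup (set gs)) \<Longrightarrow> w1 = w2"
proof (induction w1 arbitrary: w2 z)
  case Nil then show ?case by simp
next
  case (Cons a r1)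
  obtain b r2 where w2: "w2 = b # r2" using Cons.prems(3) by (cases w2) auto
  have a: "a < length gs" "valid gs r1" using Cons.prems(1) by (simp_all add: valid_Cons)
  have b: "b < length gs" "valid gs r2" using Cons.prems(2) w2 by (simp_all add: valid_Cons)
  have j1: "word_map gs r1 ((gs ! a) z) \<in> julia (gen_semigroup (set gs))" using Cons.prems(4) by simp
  have j2: "word_map gs r2 ((gs ! b) z) \<in> julia (gen_semigroup (set gs))" using Cons.prems(5) w2 by simp
  show ?case
  proof (cases "a = b")
    case True
    then have "r1 = r2" using Cons.IH[OF a(2) b(2) _ j1] j2 Cons.prems(3) w2 by simp
    then show ?thesis using True w2 by simp
  next
    case False
    have "(gs ! a) z \<in> julia (gen_semigroup (set gs))" using julia_backward[OF G a(2) j1] .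
    moreover have "(gs ! b) z \<in> julia (gen_semigroup (set gs))" using julia_backward[OF G b(2) j2] .
    ultimately have "z \<in> (gs!a) -` julia (gen_semigroup (set gs)) \<inter> (gs!b) -` julia (gen_semigroup (set gs))"
      by simp
    moreover have "(gs!a) -` julia (gen_semigroup (set gs)) \<inter> (gs!b) -` julia (gen_semigroup (set gs)) = {}"
      using A2 a(1) b(1) False unfolding A2_def by blast
    ultimately show ?thesis by blast
  qed
qed

lemma equicont_anti: "H' \<subseteq> H \<Longrightarrow> equicont_at H x \<Longrightarrow> equicont_at H' x"
  unfolding equicont_at_def
proof (intro allI impI)
  fix e :: real assume sub: "H' \<subseteq> H" and eq: "\<forall>e>0. \<exists>d>0. \<forall>y. sdist x y < d \<longrightarrow> (\<forall>h\<in>H. sdist (h x) (h y) < e)"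
    and e: "e > 0"
  obtain d where "d > 0" "\<forall>y. sdist x y < d \<longrightarrow> (\<forall>h\<in>H. sdist (h x) (h y) < e)" using eq e by blast
  then show "\<exists>d>0. \<forall>y. sdist x y < d \<longrightarrow> (\<forall>h\<in>H'. sdist (h x) (h y) < e)" using sub by blast
qed

lemma fatou_anti: "H' \<subseteq> H \<Longrightarrow> fatou H \<subseteq> fatou H'"
proof
  fix z assume sub: "H' \<subseteq> H" and z: "z \<in> fatou H"
  obtain r where "r > 0" "\<forall>x. sdist z x < r \<longrightarrow> equicont_at H x" using z unfolding fatou_def by blast
  then have "r > 0 \<and> (\<forall>x. sdist z x < r \<longrightarrow> equicont_at H' x)" using equicont_anti[OF sub] by blast
  then show "z \<in> fatou H'" unfolding fatou_def by blast
qed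

lemma minimal_eq:
  assumes "minimal_set H K" "z \<in> K"
  shows "K = sclosure {h z | h. h \<in> H}"
proof -
  have "\<forall>z\<in>K. K = sclosure {h z | h. h \<in> H}" using assms(1) unfolding minimal_set_def by (rule conjunct2[OF conjunct2])
  then show ?thesis using assms(2) by (rule bspec)
qed

lemma minimal_invariant:
  assumes "minimal_set H K" "h \<in> H" "z \<in> K"
  shows "h z \<in> K"
proof -
  have "h z \<in> {h z | h. h \<in> H}" using assms(2) by blast
  then have "h z \<in> sclosure {h z | h. h \<in> H}" by (rule subsetD[OF sclosure_sub])
  then show ?thesis by (subst minimal_eq[OF assms(1,3)])
qed

lemma minimal_closed:
  assumes "minimal_set H K"
  shows "sclosure K \<subseteq> K"
proof -
  obtain z where z: "z \<in> K" using assms unfolding minimal_set_def by blast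
  have "sclosure (sclosure {h z | h. h \<in> H}) \<subseteq> sclosure {h z | h. h \<in> H}" by (rule sclosure_idem)
  then show ?thesis by (subst (1 2) minimal_eq[OF assms z])
qed

lemma minimal_disjoint:
  assumes "minimal_set H K1" "minimal_set H K2" "K1 \<noteq> K2"
  shows "K1 \<inter> K2 = {}"
proof (rule ccontr)
  assume "K1 \<inter> K2 \<noteq> {}"
  then obtain z where z: "z \<in> K1" "z \<in> K2" by blast
  have "K1 = sclosure {h z | h. h \<in> H}" by (rule minimal_eq[OF assms(1) z(1)])
  moreover have "K2 = sclosure {h z | h. h \<in> H}" by (rule minimal_eq[OF assms(2) z(2)])
  ultimately show False using assms(3) by simp
qed



theorem mainTheorem12:
  fixes gs fs :: "(rsphere \<Rightarrow> rsphere) list" and n s :: nat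
  assumes deg: "\<forall>g\<in>set gs. \<exists>d\<ge>2. rat_map_of_degree g d"
    and hyp: "A1 gs" "A2 gs" "A3 gs"
    and n: "n \<ge> 2" and s: "s \<ge> 1"
    and fs_len: "length fs = s + 1" and fs_dist: "distinct fs"
    and fs_in: "set fs \<subseteq> words_of_length gs n"
  shows "A1 fs \<and> A2 fs \<and> A3 fs \<and>
    ((\<forall>g\<in>set gs. is_polynomial_map g) \<and> bounded {z. Some z \<in> postcrit gs}
       \<longrightarrow> bounded {z. Some z \<in> postcrit fs})"
proof -
  define H where "H = gen_semigroup (set gs)"
  define G where "G = gen_semigroup (set fs)"
  have good_gs: "\<forall>g\<in>set gs. \<forall>z. good g z"
  proof (intro ballI allI)
    fix g z assume "g \<in> set gs"
    then obtain d where "d \<ge> 2" "rat_map_of_degree g d" using deg by blast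
    then show "good g z" using rat_map_good[of g d z] by simp
  qed
  have L: "\<forall>g\<in>set gs. \<forall>z. LocHol g z" using good_gs unfolding good_def by blast
  have O: "\<forall>g\<in>set gs. sopen g" using good_gs good_sopen by blast
  have fs_word: "\<exists>ws. f = word_map gs ws \<and> length ws = n \<and> valid gs ws" if "f \<in> set fs" for f
    using fs_in that unfolding words_of_length_def valid_def by blast
  have fsH: "set fs \<subseteq> H"
  proof
    fix f assume "f \<in> set fs"
    then obtain ws where ws: "f = word_map gs ws" "length ws = n" "valid gs ws" using fs_word by blast
    have "ws \<noteq> []" using ws(2) n by auto
    then show "f \<in> H" using word_in[OF ws(3)] ws(1) unfolding H_def by simp
  qed
  have GH: "G \<subseteq> H" unfolding G_def H_def by (rule gen_semigroup_sub[OF fsH[unfolded H_def]])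
  have LH: "\<forall>z. LocHol h z" if "h \<in> H" for h using H_LocHol[OF L] that unfolding H_def by blast
  have CV: "\<exists>h\<in>insert id H. \<exists>w\<in>critical_values gs. v = h w" if v: "v \<in> critical_values fs" for v
  proof -
    obtain f y where fy: "f \<in> set fs" "critical_point f y" "v = f y"
      using v unfolding critical_values_def by blast
    obtain ws where ws: "f = word_map gs ws" "length ws = n" "valid gs ws" using fs_word fy(1) by blast
    show ?thesis using word_crit[OF L ws(3)] fy ws(1) unfolding H_def by blast
  qed
  have PC: "postcrit fs \<subseteq> postcrit gs"
    unfolding postcrit_def
  proof (rule sclosure_mono, rule subsetI)
    fix x assume "x \<in> (\<Union>h\<in>insert id (gen_semigroup (set fs)). h ` critical_values fs)"
    then obtain h v where hv: "h \<in> insert id G" "v \<in> critical_values fs" "x = h v"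
      unfolding G_def by blast
    obtain h' w where hw: "h' \<in> insert id H" "w \<in> critical_values gs" "v = h' w" using CV[OF hv(2)] by blast
    have "h \<circ> h' \<in> insert id H"
    proof (cases "h = id")
      case True then show ?thesis using hw(1) by simp
    next
      case False
      then have hH: "h \<in> H" using hv(1) GH by blast
      show ?thesis
      proof (cases "h' = id")
        case True then show ?thesis using hH by simp
      next
        case False
        then have "h' \<in> H" using hw(1) by blast
        then show ?thesis using hH unfolding H_def by (simp add: gen_semigroup.comp)
      qed
    qed
    moreover have "x = (h \<circ> h') w" using hv(3) hw(3) by simp
    ultimately show "x \<in> (\<Union>h\<in>insert id (gen_semigroup (set gs)). h ` critical_values gs)"
      using hw(2) unfolding H_def by blast
  qed
  have FH: "fatou H \<subseteq> fatou G" by (rule fatou_anti[OF GH])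
  have A1fs: "A1 fs"
    using PC hyp(1) FH unfolding A1_def H_def G_def by blast
  have JGH: "julia G \<subseteq> julia H" using FH unfolding julia_def by blast
  have A2fs: "A2 fs"
    unfolding A2_def
  proof (intro allI impI)
    fix i j assume ij: "i < length fs" "j < length fs" "i \<noteq> j"
    show "fs ! i -` julia (gen_semigroup (set fs)) \<inter> fs ! j -` julia (gen_semigroup (set fs)) = {}"
    proof (rule ccontr)
      assume "fs ! i -` julia (gen_semigroup (set fs)) \<inter> fs ! j -` julia (gen_semigroup (set fs)) \<noteq> {}"
      then obtain z where z: "(fs ! i) z \<in> julia G" "(fs ! j) z \<in> julia G" unfolding G_def by blast
      obtain w1 where w1: "fs ! i = word_map gs w1" "length w1 = n" "valid gs w1"
        using fs_word ij(1) by (meson nth_mem)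
      obtain w2 where w2: "fs ! j = word_map gs w2" "length w2 = n" "valid gs w2"
        using fs_word ij(2) by (meson nth_mem)
      have "word_map gs w1 z \<in> julia H" "word_map gs w2 z \<in> julia H" using z JGH w1(1) w2(1) by auto
      then have "w1 = w2" using words_eq[OF O hyp(2) w1(3) w2(3)] w1(2) w2(2) unfolding H_def by simp
      then have "fs ! i = fs ! j" using w1(1) w2(1) by simp
      then show False using fs_dist ij nth_eq_iff_index_eq by blast
    qed
  qed
  have Gne: "G \<noteq> {}"
  proof -
    have "fs \<noteq> []" using fs_len by auto
    then have "hd fs \<in> set fs" by simp
    then show ?thesis unfolding G_def using gen_semigroup.gen by blast
  qed
  have Gcont: "\<forall>g\<in>G. scont g" using LH GH LocHol_scont by blast
  have Gcomp: "\<forall>g\<in>G. \<forall>h\<in>G. g \<circ> h \<in> G" unfolding G_def by (blast intro: gen_semigroup.comp)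
  have sub_min: "\<exists>M. M \<subseteq> K \<and> minimal_set G M" if K: "minimal_set H K" for K
  proof (rule exists_minimal)
    show "scompact K" "K \<noteq> {}" using K unfolding minimal_set_def by blast+
    show "sclosure K \<subseteq> K" by (rule minimal_closed[OF K])
    show "\<forall>g\<in>G. g ` K \<subseteq> K"
    proof (intro ballI subsetI)
      fix g y assume g: "g \<in> G" and y: "y \<in> g ` K"
      then obtain z where "z \<in> K" "y = g z" by blast
      then show "y \<in> K" using minimal_invariant[OF K _ \<open>z \<in> K\<close>] g GH by blast
    qed
  qed (use Gne Gcont Gcomp in auto)
  have A3fs: "A3 fs"
  proof -
    obtain K1 K2 where K: "K1 \<noteq> K2" "minimal_set H K1" "minimal_set H K2"
      using hyp(3) unfolding A3_def H_def by blast
    obtain M1 where M1: "M1 \<subseteq> K1" "minimal_set G M1" using sub_min[OF K(2)] by blast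
    obtain M2 where M2: "M2 \<subseteq> K2" "minimal_set G M2" using sub_min[OF K(3)] by blast
    have "K1 \<inter> K2 = {}" by (rule minimal_disjoint[OF K(2,3,1)])
    moreover have "M1 \<noteq> {}" using M1(2) unfolding minimal_set_def by blast
    ultimately have "M1 \<noteq> M2" using M1(1) M2(1) by blast
    then show ?thesis using M1(2) M2(2) unfolding A3_def G_def by blast
  qed
  have bd: "bounded {z. Some z \<in> postcrit gs} \<longrightarrow> bounded {z. Some z \<in> postcrit fs}"
  proof
    assume "bounded {z. Some z \<in> postcrit gs}"
    moreover have "{z. Some z \<in> postcrit fs} \<subseteq> {z. Some z \<in> postcrit gs}" using PC by blast
    ultimately show "bounded {z. Some z \<in> postcrit fs}" by (rule bounded_subset)
  qed
  show ?thesis using A1fs A2fs A3fs bd by blast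
qed

end
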